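(* Let $\nu$ be an increasing function on $[0,\infty)$ such that $r\mapsto e^{-tr}\in L^1([0,\infty),d\nu)$ for all $t>0$, and such that there exist $C_\nu>0$, $s_0>0$ with $\nu(2s)\le C_\nu\nu(s)$ for all $s\ge s_0$. For $\alpha>0$ define $$\nu^\alpha(s):=\frac{1}{\Gamma(\alpha)}\int_0^s\int_0^r(r-\tilde r)^{\alpha-1}\,d\nu(\tilde r)\,dr.$$ Then $\nu^\alpha$ is increasing and defines a measure satisfying $$\int_0^\infty e^{-tr}\,d\nu^\alpha(r)=t^{-\alpha}\int_0^\infty e^{-tr}\,d\nu(r)\quad(t>0),$$ and $\nu^\alpha$ satisfies the doubling condition $\nu^\alpha(2s)\le C_\nu^2\,2^{2\alpha}\,\nu^\alpha(s)$ for all $s\ge 2s_0$.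
   Context: Integrals are Lebesgue–Stieltjes integrals with respect to the measures associated with the increasing functions. *)

theory Defs
  imports "HOL-Analysis.Analysis"
begin

text \<open>Lebesgue--Stieltjes measure on the real line associated with an increasing
  function on [0,inf): convention nu(0-) = 0 (the function is extended by 0 to
  the negative reals) and the right-continuous modification is used, so that
  the measure of [0,s] is nu(s+).\<close>
definition LS_measure :: "(real \<Rightarrow> real) \<Rightarrow> real measure" where
  "LS_measure \<nu> = interval_measure (\<lambda>x. if x < 0 then 0 else Lim (at_right x) \<nu>)"

definition nu_alpha :: "real \<Rightarrow> (real \<Rightarrow> real) \<Rightarrow> real \<Rightarrow> real" where
  "nu_alpha \<alpha> \<nu> s =
     (LINT r:{0..s}|lborel. (LINT x:{0..r}|LS_measure \<nu>. (r - x) powr (\<alpha> - 1))) / Gamma \<alpha>"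

end

theory Submission
  imports Defs "HOL-Real_Asymp.Real_Asymp"
begin
definition RC :: "(real \<Rightarrow> real) \<Rightarrow> real \<Rightarrow> real" where
  "RC f x = (if x < 0 then 0 else Lim (at_right x) f)"

lemma LS_RC: "LS_measure f = interval_measure (RC f)"
  unfolding LS_measure_def RC_def by simp

locale mono0 =
  fixes f :: "real \<Rightarrow> real"
  assumes mono: "mono_on {0..} f" and nn: "0 \<le> f 0"
begin

lemma mono': "0 \<le> a \<Longrightarrow> a \<le> b \<Longrightarrow> f a \<le> f b"
  using mono by (auto simp: mono_on_def)

lemma tends: assumes "0 \<le> x" shows "(f \<longlongrightarrow> Inf (f ` {x<..})) (at_right x)"
proof -
  have "(f \<longlongrightarrow> Inf (f ` ({x<..} \<inter> {0..}))) (at x within ({x<..} \<inter> {0..}))"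
    by (rule Lim_right_bound[where K="f 0"]) (use assms in \<open>auto intro: mono'\<close>)
  moreover have "{x<..} \<inter> {0..} = {x<..}" using assms by auto
  ultimately show ?thesis by simp
qed

lemma RC_eq: assumes "0 \<le> x" shows "RC f x = Inf (f ` {x<..})"
  using tends[OF assms] assms unfolding RC_def by (simp add: tendsto_Lim)

lemma bdd: "bdd_below (f ` {x<..})" if "0 \<le> x" for x
  using that by (intro bdd_belowI[where m="f 0"]) (auto intro: mono')

lemma RC_le: assumes "0 \<le> x" "x < y" shows "RC f x \<le> f y"
  unfolding RC_eq[OF assms(1)] using assms by (intro cInf_lower bdd) auto

lemma RC_ge: assumes "0 \<le> x" shows "f x \<le> RC f x"
  unfolding RC_eq[OF assms(1)] using assms
  by (intro cInf_greatest) (auto intro: mono')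

lemma RC_tends: assumes "0 \<le> x" shows "(f \<longlongrightarrow> RC f x) (at_right x)"
  using tends[OF assms] RC_eq[OF assms] by simp

lemma RC_nonneg: "0 \<le> RC f x"
  using RC_ge[of x] mono'[of 0 x] nn by (auto simp: RC_def)

lemma RC_neg: "x < 0 \<Longrightarrow> RC f x = 0" by (simp add: RC_def)

lemma RC_mono: assumes "x \<le> y" shows "RC f x \<le> RC f y"
proof (cases "x < 0")
  case True then show ?thesis using RC_nonneg[of y] by (simp add: RC_neg)
next
  case False
  then have "RC f x \<le> Inf (f ` {y<..})"
    by (intro cInf_greatest) (use False assms in \<open>auto intro: RC_le\<close>)
  then show ?thesis using RC_eq[of y] False assms by simp
qed

lemma RC_cont: "continuous (at_right a) (RC f)"
proof (cases "a < 0")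
  case True
  have "eventually (\<lambda>y. y < 0) (at_right a)" using eventually_at_right_real[OF True] by eventually_elim auto
  then have "eventually (\<lambda>y. RC f y = RC f a) (at_right a)"
    by eventually_elim (use True in \<open>simp add: RC_neg\<close>)
  then show ?thesis unfolding continuous_within
    by (rule tendsto_eventually)
next
  case False
  then have a: "0 \<le> a" by simp
  have lim2': "((\<lambda>y. 2 * y - a) \<longlongrightarrow> 2 * a - a) (at_right a)"
    by (intro tendsto_intros)
  then have lim2: "((\<lambda>y. 2 * y - a) \<longlongrightarrow> a) (at_right a)" by simp
  have ev2: "eventually (\<lambda>y. 2 * y - a \<in> {a<..} \<and> 2 * y - a \<noteq> a) (at_right a)"
    using eventually_at_right_less[of a] by eventually_elim auto
  have fl: "filterlim (\<lambda>y. 2 * y - a) (at_right a) (at_right a)"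
    unfolding filterlim_at using lim2 ev2 by blast
  have up: "((\<lambda>y. f (2 * y - a)) \<longlongrightarrow> RC f a) (at_right a)"
    using filterlim_compose[OF RC_tends[OF a] fl] by (simp add: o_def)
  have lo: "(f \<longlongrightarrow> RC f a) (at_right a)" by (rule RC_tends[OF a])
  have e1: "eventually (\<lambda>y. f y \<le> RC f y) (at_right a)"
    using eventually_at_right_less[of a] by eventually_elim (use a in \<open>auto intro: RC_ge\<close>)
  have e2: "eventually (\<lambda>y. RC f y \<le> f (2 * y - a)) (at_right a)"
    using eventually_at_right_less[of a] by eventually_elim (use a in \<open>auto intro: RC_le\<close>)
  show ?thesis unfolding continuous_within
    by (rule tendsto_sandwich[OF e1 e2 lo up])
qed

end

locale rcm =
  fixes G :: "real \<Rightarrow> real"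
  assumes G_mono: "\<And>x y. x \<le> y \<Longrightarrow> G x \<le> G y"
    and G_cont: "\<And>a. continuous (at_right a) G"
    and G_neg: "\<And>x. x < 0 \<Longrightarrow> G x = 0"
begin

abbreviation "M \<equiv> interval_measure G"

lemma G_nonneg: "0 \<le> G x"
  using G_mono[of "min x (-1)" x] G_neg[of "min x (-1)"] by simp

lemma sf: "sigma_finite_measure M"
  by (rule sigma_finite_interval_measure[OF G_mono G_cont])

lemma psf: "pair_sigma_finite M lborel"
  unfolding pair_sigma_finite_def using sf lborel.sigma_finite_measure_axioms by simp

lemma emeasure_Icc0: assumes u: "0 \<le> u" shows "emeasure M {0..u} = G u"
proof -
  let ?A = "\<lambda>n::nat. {-1/Suc n<..u}"
  have eq: "emeasure M (?A n) = G u" for n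
  proof -
    have "emeasure M (?A n) = G u - G (-1/Suc n)"
      using u by (intro emeasure_interval_measure_Ioc G_mono G_cont) (auto intro: order_trans[of _ 0])
    also have "G (-1/Suc n) = 0" by (intro G_neg) simp
    finally show ?thesis by simp
  qed
  have dec: "decseq ?A"
    unfolding decseq_def
  proof (intro allI impI subsetI)
    fix m n :: nat and x assume mn: "m \<le> n" and x: "x \<in> ?A n"
    have "1/real (Suc n) \<le> 1/real (Suc m)" using mn by (intro divide_left_mono) auto
    with x show "x \<in> ?A m" by auto
  qed
  have int: "(\<Inter>n. ?A n) = {0..u}"
  proof (intro set_eqI iffI)
    fix x assume x: "x \<in> (\<Inter>n. ?A n)"
    have "0 \<le> x"
    proof (rule ccontr)
      assume "\<not> 0 \<le> x"
      then obtain n where n: "inverse (real (Suc n)) < - x" using reals_Archimedean[of "-x"] by auto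
      have a: "-1/real (Suc n) < x" using INT_D[OF x, of n] by simp
      then have "- (1/real (Suc n)) < x" by simp
      then show False using n unfolding inverse_eq_divide by linarith
    qed
    then show "x \<in> {0..u}" using x by auto
  next
    fix x assume "x \<in> {0..u}"
    then show "x \<in> (\<Inter>n. ?A n)" by (auto intro: less_le_trans[of _ 0])
  qed
  have "(\<lambda>n. emeasure M (?A n)) \<longlonglongrightarrow> emeasure M (\<Inter>n. ?A n)"
    by (rule Lim_emeasure_decseq) (use dec eq in auto)
  then have "(\<lambda>n. ennreal (G u)) \<longlonglongrightarrow> emeasure M {0..u}" using eq int by simp
  then show ?thesis using LIMSEQ_unique[OF tendsto_const] by metis
qed

lemma exp_int: assumes t: "t > 0" and r: "0 \<le> r"
  shows "(\<integral>\<^sup>+u. ennreal (t * exp (- (t * u))) * indicator {r..} u \<partial>lborel) = ennreal (exp (- (t * r)))"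
proof -
  have "(\<integral>\<^sup>+u. ennreal (t * exp (- (t * u))) * indicator {r..} u \<partial>lborel) = ennreal (0 - (- exp (- (t * r))))"
  proof (rule nn_integral_FTC_atLeast)
    show "(\<lambda>u. t * exp (- (t * u))) \<in> borel_measurable borel" by measurable
    show "DERIV (\<lambda>u. - exp (- (t * u))) x :> t * exp (- (t * x))" for x
      by (rule derivative_eq_intros refl)+ simp
    show "0 \<le> t * exp (- (t * x))" for x using t by simp
    show "((\<lambda>u. - exp (- (t * u))) \<longlongrightarrow> 0) at_top" using t by real_asymp
  qed
  then show ?thesis by simp
qed

lemma laplace_G: assumes t: "t > 0"
  shows "(\<integral>\<^sup>+r. ennreal (indicator {0..} r * exp (- (t * r))) \<partial>M)
       = (\<integral>\<^sup>+u. ennreal (indicator {0..} u * (t * exp (- (t * u)) * G u)) \<partial>lborel)"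
proof -
  define h where "h r u = ennreal (if 0 \<le> r \<and> r \<le> u then t * exp (- (t * u)) else 0)" for r u
  have hm: "(\<lambda>(r, u). h r u) \<in> borel_measurable (M \<Otimes>\<^sub>M lborel)"
    unfolding h_def by measurable
  have "(\<integral>\<^sup>+r. ennreal (indicator {0..} r * exp (- (t * r))) \<partial>M) = (\<integral>\<^sup>+r. (\<integral>\<^sup>+u. h r u \<partial>lborel) \<partial>M)"
  proof (rule nn_integral_cong)
    fix r
    show "ennreal (indicator {0..} r * exp (- (t * r))) = (\<integral>\<^sup>+u. h r u \<partial>lborel)"
    proof (cases "0 \<le> r")
      case True
      have "ennreal (indicator {0..} r * exp (- (t * r))) = ennreal (exp (- (t*r)))" using True by simp
      also have "\<dots> = (\<integral>\<^sup>+u. ennreal (t * exp (- (t * u))) * indicator {r..} u \<partial>lborel)"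
        by (rule exp_int[OF t True, symmetric])
      also have "\<dots> = (\<integral>\<^sup>+u. h r u \<partial>lborel)" unfolding h_def
        by (intro nn_integral_cong) (use True in \<open>auto simp: indicator_def\<close>)
      finally show ?thesis .
    next
      case False
      then show ?thesis unfolding h_def by simp
    qed
  qed
  also have "\<dots> = (\<integral>\<^sup>+u. (\<integral>\<^sup>+r. h r u \<partial>M) \<partial>lborel)"
    using pair_sigma_finite.Fubini'[OF psf hm] by simp
  also have "\<dots> = (\<integral>\<^sup>+u. ennreal (indicator {0..} u * (t * exp (- (t * u)) * G u)) \<partial>lborel)"
  proof (rule nn_integral_cong)
    fix u
    show "(\<integral>\<^sup>+r. h r u \<partial>M) = ennreal (indicator {0..} u * (t * exp (- (t * u)) * G u))"
    proof (cases "0 \<le> u")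
      case True
      have "(\<integral>\<^sup>+r. h r u \<partial>M) = (\<integral>\<^sup>+r. ennreal (t * exp (- (t * u))) * indicator {0..u} r \<partial>M)"
        unfolding h_def by (intro nn_integral_cong) (auto simp: indicator_def)
      also have "\<dots> = ennreal (t * exp (- (t * u))) * G u"
        by (subst nn_integral_cmult_indicator) (simp_all add: emeasure_Icc0[OF True])
      finally show ?thesis using True t G_nonneg[of u] by (simp add: ennreal_mult)
    next
      case False
      then have "h r u = 0" for r unfolding h_def by auto
      then show ?thesis using False by simp
    qed
  qed
  finally show ?thesis .
qed

end

lemma inner_powr:
  fixes \<alpha> x s :: real
  assumes a: "\<alpha> > 0" and x: "0 \<le> x" "x \<le> s"
  shows "(\<integral>\<^sup>+r. ennreal (if x \<le> r \<and> r \<le> s then (r - x) powr (\<alpha> - 1) else 0) \<partial>lborel)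
         = ennreal ((s - x) powr \<alpha> / \<alpha>)"
proof -
  have hi: "((\<lambda>y. y powr (\<alpha> - 1)) has_integral ((s - x) powr (\<alpha> - 1 + 1) / (\<alpha> - 1 + 1))) {0..s-x}"
    by (rule has_integral_powr_from_0) (use a x in auto)
  have n: "(\<integral>\<^sup>+y. ennreal (indicator {0..s-x} y * y powr (\<alpha> - 1)) \<partial>lborel) = ennreal ((s - x) powr \<alpha> / \<alpha>)"
    using nn_integral_has_integral_lebesgue[OF _ hi] by simp
  have "(\<integral>\<^sup>+r. ennreal (if x \<le> r \<and> r \<le> s then (r - x) powr (\<alpha> - 1) else 0) \<partial>lborel)
      = ennreal \<bar>1::real\<bar> * (\<integral>\<^sup>+y. ennreal (if x \<le> x + 1 * y \<and> x + 1 * y \<le> s then (x + 1 * y - x) powr (\<alpha> - 1) else 0) \<partial>lborel)"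
    by (rule nn_integral_real_affine) auto
  also have "\<dots> = (\<integral>\<^sup>+y. ennreal (indicator {0..s-x} y * y powr (\<alpha> - 1)) \<partial>lborel)"
  proof -
    have "\<And>y. ennreal (if x \<le> x + 1 * y \<and> x + 1 * y \<le> s then (x + 1 * y - x) powr (\<alpha> - 1) else 0)
       = ennreal (indicator {0..s-x} y * y powr (\<alpha> - 1))" by (auto simp: indicator_def)
    then show ?thesis by simp
  qed
  finally show ?thesis using n by simp
qed

lemma gamma_shift:
  fixes \<alpha> x t :: real
  assumes a: "\<alpha> > 0" and x: "0 \<le> x" and t: "t > 0"
  shows "(\<integral>\<^sup>+u. ennreal (if 0 \<le> x \<and> x \<le> u then exp (- (t * u)) * (u - x) powr \<alpha> else 0) \<partial>lborel)
         = ennreal (exp (- (t * x)) * (Gamma (\<alpha> + 1) / t powr (\<alpha> + 1)))"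
proof -
  have g: "ennreal (Gamma (\<alpha> + 1)) = (\<integral>\<^sup>+v. ennreal (indicator {0..} v * v powr \<alpha> / exp v) \<partial>lborel)"
    using Gamma_conv_nn_integral_real[of "\<alpha> + 1"] a by simp
  have "(\<integral>\<^sup>+u. ennreal (if 0 \<le> x \<and> x \<le> u then exp (- (t * u)) * (u - x) powr \<alpha> else 0) \<partial>lborel)
     = ennreal \<bar>1/t\<bar> * (\<integral>\<^sup>+v. ennreal (if 0 \<le> x \<and> x \<le> x + 1/t * v then exp (- (t * (x + 1/t * v))) * (x + 1/t * v - x) powr \<alpha> else 0) \<partial>lborel)"
    by (rule nn_integral_real_affine) (use t in auto)
  also have "\<dots> = ennreal (1/t) * (\<integral>\<^sup>+v. ennreal (exp (- (t * x)) / t powr \<alpha>) * ennreal (indicator {0..} v * v powr \<alpha> / exp v) \<partial>lborel)"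
  proof -
    have "ennreal (if 0 \<le> x \<and> x \<le> x + 1/t * v then exp (- (t * (x + 1/t * v))) * (x + 1/t * v - x) powr \<alpha> else 0)
        = ennreal (exp (- (t * x)) / t powr \<alpha>) * ennreal (indicator {0..} v * v powr \<alpha> / exp v)" for v
    proof (cases "0 \<le> v")
      case True
      have "- (t * (x + 1/t * v)) = - (t * x) + - v" using t by (simp add: field_simps)
      then have "exp (- (t * (x + 1/t * v))) = exp (- (t * x) + - v)" by (rule arg_cong)
      also have "\<dots> = exp (- (t * x)) / exp v" by (simp only: exp_add exp_minus) (simp add: divide_inverse)
      finally have e: "exp (- (t * (x + 1/t * v))) = exp (- (t * x)) / exp v" .
      have p: "(x + 1/t * v - x) powr \<alpha> = v powr \<alpha> / t powr \<alpha>"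
        using t True by (simp add: powr_divide)
      have c: "0 \<le> x \<and> x \<le> x + 1/t * v" using True t x by simp
      have "ennreal (if 0 \<le> x \<and> x \<le> x + 1/t * v then exp (- (t * (x + 1/t * v))) * (x + 1/t * v - x) powr \<alpha> else 0)
          = ennreal (exp (- (t * x)) / exp v * (v powr \<alpha> / t powr \<alpha>))"
        by (simp only: if_P[OF c] e p)
      also have "exp (- (t * x)) / exp v * (v powr \<alpha> / t powr \<alpha>) = (exp (- (t * x)) / t powr \<alpha>) * (indicator {0..} v * v powr \<alpha> / exp v)"
        using True by simp
      also have "ennreal \<dots> = ennreal (exp (- (t * x)) / t powr \<alpha>) * ennreal (indicator {0..} v * v powr \<alpha> / exp v)"
        by (rule ennreal_mult) (use True in auto)
      finally show ?thesis .
    next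
      case False
      then have "\<not> (x \<le> x + 1/t * v)" using t by (simp add: field_simps)
      then show ?thesis using False by simp
    qed
    then show ?thesis using t by simp
  qed
  also have "\<dots> = ennreal (1/t) * (ennreal (exp (- (t * x)) / t powr \<alpha>) * ennreal (Gamma (\<alpha> + 1)))"
    by (subst nn_integral_cmult) (auto simp: g)
  also have "\<dots> = ennreal (exp (- (t * x)) * (Gamma (\<alpha> + 1) / t powr (\<alpha> + 1)))"
  proof -
    have "1/t * (exp (- (t * x)) / t powr \<alpha> * Gamma (\<alpha> + 1)) = exp (- (t * x)) * (Gamma (\<alpha> + 1) / t powr (\<alpha> + 1))"
      using t by (simp add: powr_add field_simps)
    moreover have "Gamma (\<alpha> + 1) \<ge> 0" using a by (intro less_imp_le Gamma_real_pos) simp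
    ultimately show ?thesis using t by (simp add: ennreal_mult''[symmetric] mult.assoc)
  qed
  finally show ?thesis .
qed

lemma mono0_rcm: "mono0 f \<Longrightarrow> rcm (RC f)"
  unfolding rcm_def using mono0.RC_mono mono0.RC_cont mono0.RC_neg by blast

locale setting = mono0 f for f +
  fixes \<alpha> :: real assumes alpha: "\<alpha> > 0"
begin

sublocale R: rcm "RC f" by (rule mono0_rcm) (rule mono0_axioms)

abbreviation "\<mu> \<equiv> interval_measure (RC f)"

definition A where "A s = (\<integral>\<^sup>+x. ennreal (if 0 \<le> x \<and> x \<le> s then (s - x) powr \<alpha> else 0) \<partial>\<mu>)"
definition I where "I r = (\<integral>\<^sup>+x. ennreal (if 0 \<le> x \<and> x \<le> r then (r - x) powr (\<alpha> - 1) else 0) \<partial>\<mu>)"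
definition phi where "phi r = (LINT x:{0..r}|\<mu>. (r - x) powr (\<alpha> - 1))"

lemma A_upper: assumes s: "0 \<le> s" shows "A s \<le> ennreal (s powr \<alpha> * RC f s)"
proof -
  have "A s \<le> (\<integral>\<^sup>+x. ennreal (s powr \<alpha>) * indicator {0..s} x \<partial>\<mu>)"
    unfolding A_def
    by (intro nn_integral_mono) (auto simp: indicator_def intro!: powr_mono2 alpha[THEN less_imp_le])
  also have "\<dots> = ennreal (s powr \<alpha>) * RC f s"
    by (subst nn_integral_cmult_indicator) (simp_all add: R.emeasure_Icc0[OF s])
  finally show ?thesis using R.G_nonneg[of s] by (simp add: ennreal_mult)
qed

lemma A_fin: "0 \<le> s \<Longrightarrow> A s < \<infinity>"
  using A_upper[of s] by (simp add: le_less_trans)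

lemma A_lower: assumes "0 \<le> a" "a \<le> s" shows "ennreal ((s - a) powr \<alpha> * RC f a) \<le> A s"
proof -
  have "ennreal ((s - a) powr \<alpha> * RC f a) = ennreal ((s - a) powr \<alpha>) * RC f a"
    using R.G_nonneg[of a] by (simp add: ennreal_mult)
  also have "\<dots> = (\<integral>\<^sup>+x. ennreal ((s - a) powr \<alpha>) * indicator {0..a} x \<partial>\<mu>)"
    by (subst nn_integral_cmult_indicator) (simp_all add: R.emeasure_Icc0[OF assms(1)])
  also have "\<dots> \<le> A s"
    unfolding A_def using assms
    by (intro nn_integral_mono) (auto simp: indicator_def intro!: powr_mono2 alpha[THEN less_imp_le])
  finally show ?thesis .
qed

lemma A_mono: assumes "0 \<le> s" "s \<le> s'" shows "A s \<le> A s'"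
  unfolding A_def using assms
  by (intro nn_integral_mono) (auto intro!: powr_mono2 alpha[THEN less_imp_le])

lemma A_0: "A 0 = 0"
proof -
  have "\<And>x. ennreal (if 0 \<le> x \<and> x \<le> 0 then (0 - x) powr \<alpha> else 0) = 0" by auto
  then show ?thesis unfolding A_def by simp
qed

lemma tonelli1: assumes s: "0 \<le> s"
  shows "(\<integral>\<^sup>+r. ennreal (indicator {0..s} r) * I r \<partial>lborel) = ennreal (1/\<alpha>) * A s"
proof -
  define k where "k x r = ennreal (if 0 \<le> x \<and> x \<le> r \<and> r \<le> s then (r - x) powr (\<alpha> - 1) else 0)" for x r
  have km: "case_prod k \<in> borel_measurable (\<mu> \<Otimes>\<^sub>M lborel)"
    unfolding k_def by measurable
  have "(\<integral>\<^sup>+r. ennreal (indicator {0..s} r) * I r \<partial>lborel) = (\<integral>\<^sup>+r. (\<integral>\<^sup>+x. k x r \<partial>\<mu>) \<partial>lborel)"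
  proof (rule nn_integral_cong)
    fix r
    show "ennreal (indicator {0..s} r) * I r = (\<integral>\<^sup>+x. k x r \<partial>\<mu>)"
    proof (cases "r \<in> {0..s}")
      case True
      have "ennreal (indicator {0..s} r) * I r = I r" using True by simp
      also have "I r = (\<integral>\<^sup>+x. k x r \<partial>\<mu>)"
        unfolding I_def k_def using True by (intro nn_integral_cong) auto
      finally show ?thesis .
    next
      case False
      then have "k x r = 0" for x unfolding k_def by auto
      then show ?thesis using False by simp
    qed
  qed
  also have "\<dots> = (\<integral>\<^sup>+x. (\<integral>\<^sup>+r. k x r \<partial>lborel) \<partial>\<mu>)"
    by (rule pair_sigma_finite.Fubini'[OF R.psf km])
  also have "\<dots> = (\<integral>\<^sup>+x. ennreal (1/\<alpha>) * ennreal (if 0 \<le> x \<and> x \<le> s then (s - x) powr \<alpha> else 0) \<partial>\<mu>)"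
  proof (rule nn_integral_cong)
    fix x
    show "(\<integral>\<^sup>+r. k x r \<partial>lborel) = ennreal (1/\<alpha>) * ennreal (if 0 \<le> x \<and> x \<le> s then (s - x) powr \<alpha> else 0)"
    proof (cases "0 \<le> x \<and> x \<le> s")
      case True
      have "(\<integral>\<^sup>+r. k x r \<partial>lborel) = (\<integral>\<^sup>+r. ennreal (if x \<le> r \<and> r \<le> s then (r - x) powr (\<alpha> - 1) else 0) \<partial>lborel)"
        unfolding k_def using True by (intro nn_integral_cong) auto
      also have "\<dots> = ennreal ((s - x) powr \<alpha> / \<alpha>)"
        using True by (intro inner_powr alpha) auto
      finally show ?thesis using True alpha by (simp add: ennreal_mult[symmetric])
    next
      case False
      then have "k x r = 0" for r unfolding k_def by auto
      then show ?thesis by (simp only: if_not_P[OF False]) simp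
    qed
  qed
  also have "\<dots> = ennreal (1/\<alpha>) * A s"
    unfolding A_def by (rule nn_integral_cmult) measurable
  finally show ?thesis .
qed

lemma I_meas: "I \<in> borel_measurable lborel"
proof -
  have "(\<lambda>r. \<integral>\<^sup>+x. ennreal (if 0 \<le> x \<and> x \<le> r then (r - x) powr (\<alpha> - 1) else 0) \<partial>\<mu>) \<in> borel_measurable lborel"
    using sigma_finite_measure.borel_measurable_nn_integral_fst[OF R.sf,
        of "\<lambda>(r, x). ennreal (if 0 \<le> x \<and> x \<le> r then (r - x) powr (\<alpha> - 1) else 0)" lborel]
    by (simp add: measurable_split_conv)
  then show ?thesis unfolding I_def[abs_def] .
qed

lemma phi_eq: "phi r = enn2real (I r)"
proof -
  have "phi r = enn2real (\<integral>\<^sup>+x. ennreal (indicator {0..r} x *\<^sub>R (r - x) powr (\<alpha> - 1)) \<partial>\<mu>)"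
    unfolding phi_def set_lebesgue_integral_def
    by (rule integral_eq_nn_integral) (auto simp: indicator_def)
  also have "(\<integral>\<^sup>+x. ennreal (indicator {0..r} x *\<^sub>R (r - x) powr (\<alpha> - 1)) \<partial>\<mu>) = I r"
    unfolding I_def by (intro nn_integral_cong) (auto simp: indicator_def)
  finally show ?thesis .
qed

lemma phi_meas: "phi \<in> borel_measurable lborel"
  unfolding phi_eq[abs_def] using I_meas by measurable

lemma phi_nonneg: "0 \<le> phi r" unfolding phi_eq by simp

lemma phi_main: assumes s: "0 \<le> s"
  shows "set_integrable lborel {0..s} phi"
    and "(LINT r:{0..s}|lborel. phi r) = enn2real (A s) / \<alpha>"
proof -
  have J: "(\<integral>\<^sup>+r. ennreal (indicator {0..s} r) * I r \<partial>lborel) \<noteq> \<infinity>"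
    using tonelli1[OF s] A_fin[OF s] by (simp add: ennreal_mult_eq_top_iff)
  have AE: "AE r in lborel. ennreal (indicator {0..s} r) * I r \<noteq> \<infinity>"
    by (rule nn_integral_PInf_AE[OF _ J]) (use I_meas in measurable)
  have eq: "(\<integral>\<^sup>+r. ennreal (indicator {0..s} r *\<^sub>R phi r) \<partial>lborel) = ennreal (1/\<alpha>) * A s"
  proof -
    have "(\<integral>\<^sup>+r. ennreal (indicator {0..s} r *\<^sub>R phi r) \<partial>lborel) = (\<integral>\<^sup>+r. ennreal (indicator {0..s} r) * I r \<partial>lborel)"
    proof (rule nn_integral_cong_AE)
      show "AE r in lborel. ennreal (indicator {0..s} r *\<^sub>R phi r) = ennreal (indicator {0..s} r) * I r"
        using AE by eventually_elim (auto simp: indicator_def phi_eq less_top)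
    qed
    then show ?thesis using tonelli1[OF s] by simp
  qed
  have meas: "(\<lambda>r. indicator {0..s} r *\<^sub>R phi r) \<in> borel_measurable lborel"
    using phi_meas by measurable
  show "set_integrable lborel {0..s} phi"
    unfolding set_integrable_def
    by (rule integrableI_nonneg[OF meas]) (use eq A_fin[OF s] phi_nonneg in \<open>auto simp: ennreal_mult_less_top indicator_def\<close>)
  have "(LINT r:{0..s}|lborel. phi r) = enn2real (ennreal (1/\<alpha>) * A s)"
    unfolding set_lebesgue_integral_def eq[symmetric]
    by (rule integral_eq_nn_integral[OF meas]) (use phi_nonneg in \<open>auto simp: indicator_def\<close>)
  also have "\<dots> = enn2real (A s) / \<alpha>" using alpha by (simp add: enn2real_mult)
  finally show "(LINT r:{0..s}|lborel. phi r) = enn2real (A s) / \<alpha>" .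
qed

end

context setting
begin

abbreviation "na \<equiv> nu_alpha \<alpha> f"

lemma A_fin': "0 \<le> s \<Longrightarrow> A s < top" using A_fin[of s] by simp

lemma Gpos: "\<alpha> * Gamma \<alpha> > 0" using alpha Gamma_real_pos[of \<alpha>] by simp

lemma na_phi: "nu_alpha \<alpha> f s = (LINT r:{0..s}|lborel. phi r) / Gamma \<alpha>"
  unfolding nu_alpha_def phi_def LS_RC ..

lemma na_eq: "0 \<le> s \<Longrightarrow> na s = enn2real (A s) / (\<alpha> * Gamma \<alpha>)"
  unfolding na_phi phi_main(2) by simp

lemma na_mono: "mono_on {0..} na"
proof (rule mono_onI)
  fix a b :: real assume "a \<in> {0..}" "b \<in> {0..}" "a \<le> b"
  then have "enn2real (A a) \<le> enn2real (A b)"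
    by (intro enn2real_mono A_mono A_fin') auto
  then show "na a \<le> na b" using \<open>a \<in> {0..}\<close> \<open>b \<in> {0..}\<close> Gpos
    by (simp add: na_eq divide_right_mono)
qed

lemma na_0: "na 0 = 0" by (simp add: na_eq A_0)

lemma na_cont: assumes b: "0 \<le> b" shows "continuous_on {0..b} na"
proof -
  have int: "phi integrable_on {0..b}" by (rule set_borel_integral_eq_integral(1)[OF phi_main(1)[OF b]])
  have c: "continuous_on {0..b} (\<lambda>s. integral {0..s} phi / Gamma \<alpha>)"
    by (intro continuous_on_divide indefinite_integral_continuous_1[OF int] continuous_on_const)
       (use Gpos in auto)
  show ?thesis
  proof (rule continuous_on_eq[OF c])
    fix s assume "s \<in> {0..b}"
    then show "integral {0..s} phi / Gamma \<alpha> = na s"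
      unfolding na_phi by (simp add: set_borel_integral_eq_integral(2)[OF phi_main(1)])
  qed
qed

lemma RC_na: assumes s: "0 \<le> s" shows "RC na s = na s"
proof -
  have "continuous_on {s..s+1} na"
    by (rule continuous_on_subset[OF na_cont[of "s+1"]]) (use s in auto)
  then have "(na \<longlongrightarrow> na s) (at_right s)" by (rule continuous_on_Icc_at_rightD) simp
  then show ?thesis unfolding RC_def using s by (simp add: tendsto_Lim)
qed

lemma mono0_na: "mono0 na"
  by unfold_locales (use na_mono na_0 in auto)

lemma laplace_alpha: assumes t: "t > 0"
  shows "(\<integral>\<^sup>+r. ennreal (indicator {0..} r * exp (- (t * r))) \<partial>interval_measure (RC na))
       = ennreal (t powr (- \<alpha>)) * (\<integral>\<^sup>+r. ennreal (indicator {0..} r * exp (- (t * r))) \<partial>\<mu>)"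
proof -
  interpret Ra: rcm "RC na" by (rule mono0_rcm[OF mono0_na])
  define q where "q u x = ennreal (if 0 \<le> x \<and> x \<le> u then exp (- (t * u)) * (u - x) powr \<alpha> else 0)" for u x
  define c where "c = t / (\<alpha> * Gamma \<alpha>)"
  have c0: "c \<ge> 0" unfolding c_def using t Gpos by simp
  have qm: "(\<lambda>(x, u). q u x) \<in> borel_measurable (\<mu> \<Otimes>\<^sub>M lborel)" unfolding q_def by measurable
  have qm2: "(\<lambda>(u, x). q u x) \<in> borel_measurable (lborel \<Otimes>\<^sub>M \<mu>)" unfolding q_def by measurable
  have Qm: "(\<lambda>u. \<integral>\<^sup>+x. q u x \<partial>\<mu>) \<in> borel_measurable lborel"
    using sigma_finite_measure.borel_measurable_nn_integral_fst[OF R.sf qm2] by simp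
  have "(\<integral>\<^sup>+r. ennreal (indicator {0..} r * exp (- (t * r))) \<partial>interval_measure (RC na))
      = (\<integral>\<^sup>+u. ennreal (indicator {0..} u * (t * exp (- (t * u)) * RC na u)) \<partial>lborel)"
    by (rule Ra.laplace_G[OF t])
  also have "\<dots> = (\<integral>\<^sup>+u. ennreal c * (\<integral>\<^sup>+x. q u x \<partial>\<mu>) \<partial>lborel)"
  proof (rule nn_integral_cong)
    fix u
    show "ennreal (indicator {0..} u * (t * exp (- (t * u)) * RC na u)) = ennreal c * (\<integral>\<^sup>+x. q u x \<partial>\<mu>)"
    proof (cases "0 \<le> u")
      case True
      have "ennreal (indicator {0..} u * (t * exp (- (t * u)) * RC na u))
          = ennreal (c * (exp (- (t * u)) * enn2real (A u)))"
        using True by (simp add: RC_na na_eq c_def mult_ac)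
      also have "\<dots> = ennreal c * (ennreal (exp (- (t * u))) * A u)"
        using c0 A_fin[OF True] by (simp add: ennreal_mult ennreal_enn2real_if)
      also have "ennreal (exp (- (t * u))) * A u = (\<integral>\<^sup>+x. ennreal (exp (- (t * u))) * ennreal (if 0 \<le> x \<and> x \<le> u then (u - x) powr \<alpha> else 0) \<partial>\<mu>)"
        unfolding A_def by (rule nn_integral_cmult[symmetric]) measurable
      also have "\<dots> = (\<integral>\<^sup>+x. q u x \<partial>\<mu>)"
        unfolding q_def by (intro nn_integral_cong) (auto simp: ennreal_mult[symmetric])
      finally show ?thesis .
    next
      case False
      then have "q u x = 0" for x unfolding q_def by auto
      then show ?thesis using False by simp
    qed
  qed
  also have "\<dots> = ennreal c * (\<integral>\<^sup>+u. (\<integral>\<^sup>+x. q u x \<partial>\<mu>) \<partial>lborel)"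
    by (rule nn_integral_cmult[OF Qm])
  also have "(\<integral>\<^sup>+u. (\<integral>\<^sup>+x. q u x \<partial>\<mu>) \<partial>lborel) = (\<integral>\<^sup>+x. (\<integral>\<^sup>+u. q u x \<partial>lborel) \<partial>\<mu>)"
    by (rule pair_sigma_finite.Fubini'[OF R.psf, of "\<lambda>x u. q u x"]) (use qm in simp)
  also have "\<dots> = (\<integral>\<^sup>+x. ennreal (indicator {0..} x * exp (- (t * x))) * ennreal (Gamma (\<alpha> + 1) / t powr (\<alpha> + 1)) \<partial>\<mu>)"
  proof (rule nn_integral_cong)
    fix x
    show "(\<integral>\<^sup>+u. q u x \<partial>lborel) = ennreal (indicator {0..} x * exp (- (t * x))) * ennreal (Gamma (\<alpha> + 1) / t powr (\<alpha> + 1))"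
    proof (cases "0 \<le> x")
      case True
      have "(\<integral>\<^sup>+u. q u x \<partial>lborel) = ennreal (exp (- (t * x)) * (Gamma (\<alpha> + 1) / t powr (\<alpha> + 1)))"
        unfolding q_def by (rule gamma_shift[OF alpha True t])
      also have "\<dots> = ennreal (indicator {0..} x * exp (- (t * x))) * ennreal (Gamma (\<alpha> + 1) / t powr (\<alpha> + 1))"
      proof -
        have nn: "0 \<le> Gamma (\<alpha> + 1) / t powr (\<alpha> + 1)" using alpha Gamma_real_pos[of "\<alpha> + 1"] by simp
        show ?thesis using True nn by (simp add: ennreal_mult[symmetric])
      qed
      finally show ?thesis .
    next
      case False
      then have "q u x = 0" for u unfolding q_def by auto
      then show ?thesis using False by simp
    qed
  qed
  also have "\<dots> = (\<integral>\<^sup>+x. ennreal (indicator {0..} x * exp (- (t * x))) \<partial>\<mu>) * ennreal (Gamma (\<alpha> + 1) / t powr (\<alpha> + 1))"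
    by (rule nn_integral_multc) measurable
  also have "ennreal c * (\<dots>) = ennreal (c * (Gamma (\<alpha> + 1) / t powr (\<alpha> + 1))) * (\<integral>\<^sup>+x. ennreal (indicator {0..} x * exp (- (t * x))) \<partial>\<mu>)"
  proof -
    have g0: "0 \<le> Gamma (\<alpha> + 1) / t powr (\<alpha> + 1)" using alpha Gamma_real_pos[of "\<alpha> + 1"] by simp
    show ?thesis by (simp only: ennreal_mult[OF c0 g0] mult_ac)
  qed
  also have "c * (Gamma (\<alpha> + 1) / t powr (\<alpha> + 1)) = t powr (- \<alpha>)"
  proof -
    have g: "Gamma (\<alpha> + 1) = \<alpha> * Gamma \<alpha>"
      by (rule Gamma_plus1) (use alpha in \<open>auto elim!: nonpos_Ints_cases\<close>)
    have gn: "Gamma \<alpha> \<noteq> 0" using Gamma_real_pos[OF alpha] by simp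
    show ?thesis unfolding c_def g using t alpha gn by (simp add: powr_add powr_minus field_simps)
  qed
  finally show ?thesis .
qed

lemma G_doubling: assumes dbl: "\<forall>s\<ge>s0. f (2 * s) \<le> C * f s" and s: "s \<ge> s0" "s0 > 0"
  shows "RC f (2 * s) \<le> C * RC f s"
proof -
  have s0: "0 \<le> s" using s by simp
  have lim2: "((\<lambda>y. 2 * y) \<longlongrightarrow> 2 * s) (at_right s)" by (intro tendsto_intros)
  have ev2: "eventually (\<lambda>y. 2 * y \<in> {2 * s<..} \<and> 2 * y \<noteq> 2 * s) (at_right s)"
    using eventually_at_right_less[of s] by eventually_elim auto
  have fl: "filterlim (\<lambda>y. 2 * y) (at_right (2 * s)) (at_right s)"
    unfolding filterlim_at using lim2 ev2 by blast
  have up: "((\<lambda>y. f (2 * y)) \<longlongrightarrow> RC f (2 * s)) (at_right s)"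
    using filterlim_compose[OF RC_tends[of "2 * s"] fl] s0 by (simp add: o_def)
  have lo: "((\<lambda>y. C * f y) \<longlongrightarrow> C * RC f s) (at_right s)"
    by (intro tendsto_intros RC_tends[OF s0])
  have ev: "eventually (\<lambda>y. f (2 * y) \<le> C * f y) (at_right s)"
    using eventually_at_right_less[of s] by eventually_elim (use dbl s in auto)
  show ?thesis by (rule tendsto_le[OF _ lo up ev]) simp
qed

lemma na_doubling: assumes dbl: "\<forall>s\<ge>s0. f (2 * s) \<le> C * f s" and s: "s \<ge> 2 * s0" "s0 > 0" and C: "C > 0"
  shows "na (2 * s) \<le> C\<^sup>2 * 2 powr (2 * \<alpha>) * na s"
proof -
  have s0: "0 \<le> s" using s by simp
  have G2: "RC f (2 * s) \<le> C * RC f s" by (rule G_doubling[OF dbl _ s(2)]) (use s in simp)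
  have G1: "RC f (2 * (s/2)) \<le> C * RC f (s/2)" by (rule G_doubling[OF dbl _ s(2)]) (use s in simp)
  have up: "enn2real (A (2 * s)) \<le> (2 * s) powr \<alpha> * RC f (2 * s)"
  proof -
    have "enn2real (A (2 * s)) \<le> enn2real (ennreal ((2 * s) powr \<alpha> * RC f (2 * s)))"
      by (rule enn2real_mono[OF A_upper]) (use s0 in auto)
    moreover have "0 \<le> RC f (2 * s)" by (rule R.G_nonneg)
    ultimately show ?thesis by simp
  qed
  have lo: "(s/2) powr \<alpha> * RC f (s/2) \<le> enn2real (A s)"
  proof -
    have "enn2real (ennreal ((s - s/2) powr \<alpha> * RC f (s/2))) \<le> enn2real (A s)"
      by (rule enn2real_mono[OF A_lower A_fin']) (use s0 in auto)
    moreover have "0 \<le> RC f (s/2)" by (rule R.G_nonneg)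
    ultimately show ?thesis by simp
  qed
  have p: "(2 * s) powr \<alpha> = 2 powr (2 * \<alpha>) * (s/2) powr \<alpha>"
  proof -
    have "(2 * s) powr \<alpha> = (4 * (s/2)) powr \<alpha>" by simp
    also have "\<dots> = 4 powr \<alpha> * (s/2) powr \<alpha>" by (rule powr_mult)
    also have "(4::real) powr \<alpha> = 2 powr (2 * \<alpha>)"
      using powr_powr[of 2 2 \<alpha>] by simp
    finally show ?thesis .
  qed
  have Gn: "0 \<le> RC f s" "0 \<le> RC f (s/2)" by (rule R.G_nonneg)+
  have "enn2real (A (2 * s)) \<le> (2 * s) powr \<alpha> * (C * RC f s)"
    using up G2 by (rule order_trans[OF _ mult_left_mono]) simp
  also have "\<dots> \<le> (2 * s) powr \<alpha> * (C * (C * RC f (s/2)))"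
    using G1 C by (intro mult_left_mono) auto
  also have "\<dots> = C\<^sup>2 * 2 powr (2 * \<alpha>) * ((s/2) powr \<alpha> * RC f (s/2))"
    unfolding p by (simp add: power2_eq_square mult_ac)
  also have "\<dots> \<le> C\<^sup>2 * 2 powr (2 * \<alpha>) * enn2real (A s)"
    by (intro mult_left_mono lo) auto
  finally have *: "enn2real (A (2 * s)) \<le> C\<^sup>2 * 2 powr (2 * \<alpha>) * enn2real (A s)" .
  show ?thesis
    using divide_right_mono[OF * less_imp_le[OF Gpos]] s0 by (simp add: na_eq)
qed

end

theorem lemma2p2:
  fixes \<nu> :: "real \<Rightarrow> real" and C s\<^sub>0 \<alpha> :: real
  assumes mono: "mono_on {0..} \<nu>"
    and nonneg: "0 \<le> \<nu> 0"
    and laplace: "\<forall>t>0. set_integrable (LS_measure \<nu>) {0..} (\<lambda>r. exp (- (t * r)))"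
    and C: "C > 0" and s0: "s\<^sub>0 > 0"
    and doubling: "\<forall>s\<ge>s\<^sub>0. \<nu> (2 * s) \<le> C * \<nu> s"
    and alpha: "\<alpha> > 0"
  shows "mono_on {0..} (nu_alpha \<alpha> \<nu>)
    \<and> (\<forall>t>0. set_integrable (LS_measure (nu_alpha \<alpha> \<nu>)) {0..} (\<lambda>r. exp (- (t * r)))
          \<and> (LINT r:{0..}|LS_measure (nu_alpha \<alpha> \<nu>). exp (- (t * r)))
              = t powr (- \<alpha>) * (LINT r:{0..}|LS_measure \<nu>. exp (- (t * r))))
    \<and> (\<forall>s\<ge>2 * s\<^sub>0. nu_alpha \<alpha> \<nu> (2 * s) \<le> C\<^sup>2 * 2 powr (2 * \<alpha>) * nu_alpha \<alpha> \<nu> s)"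
proof -
  interpret S: setting \<nu> \<alpha>
    by unfold_locales (use mono nonneg alpha in auto)
  have P1: "mono_on {0..} (nu_alpha \<alpha> \<nu>)" by (rule S.na_mono)
  have P2: "set_integrable (LS_measure (nu_alpha \<alpha> \<nu>)) {0..} (\<lambda>r. exp (- (t * r)))
          \<and> (LINT r:{0..}|LS_measure (nu_alpha \<alpha> \<nu>). exp (- (t * r)))
              = t powr (- \<alpha>) * (LINT r:{0..}|LS_measure \<nu>. exp (- (t * r)))" if t: "t > 0" for t
  proof -
    have LSa: "LS_measure (nu_alpha \<alpha> \<nu>) = interval_measure (RC (nu_alpha \<alpha> \<nu>))" by (rule LS_RC)
    have LS: "LS_measure \<nu> = interval_measure (RC \<nu>)" by (rule LS_RC)
    have int: "set_integrable (LS_measure \<nu>) {0..} (\<lambda>r. exp (- (t * r)))" using laplace t by auto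
    have nrm: "\<And>x. ennreal (norm (indicator {0..} x *\<^sub>R exp (- (t * x)))) = ennreal (indicator {0..} x * exp (- (t * x)))"
      by (simp add: indicator_def)
    have fin: "(\<integral>\<^sup>+r. ennreal (indicator {0..} r * exp (- (t * r))) \<partial>interval_measure (RC \<nu>)) < \<infinity>"
      using integrableD(2)[OF int[unfolded set_integrable_def LS]] by (simp add: nrm less_top)
    note lap = S.laplace_alpha[OF t]
    have finA: "(\<integral>\<^sup>+r. ennreal (indicator {0..} r * exp (- (t * r))) \<partial>interval_measure (RC (nu_alpha \<alpha> \<nu>))) < \<infinity>"
      unfolding lap using fin by (simp add: ennreal_mult_less_top)
    have measA: "(\<lambda>r. indicator {0..} r *\<^sub>R exp (- (t * r))) \<in> borel_measurable (interval_measure (RC (nu_alpha \<alpha> \<nu>)))"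
      by measurable
    have meas: "(\<lambda>r. indicator {0..} r *\<^sub>R exp (- (t * r))) \<in> borel_measurable (interval_measure (RC \<nu>))"
      by measurable
    have nrm2: "\<And>x. ennreal (indicator {0..} x *\<^sub>R exp (- (t * x))) = ennreal (indicator {0..} x * exp (- (t * x)))"
      by simp
    have A1: "set_integrable (LS_measure (nu_alpha \<alpha> \<nu>)) {0..} (\<lambda>r. exp (- (t * r)))"
      unfolding set_integrable_def LSa
      by (rule integrableI_nonneg[OF measA]) (use finA in \<open>auto simp: indicator_def\<close>)
    have "(LINT r:{0..}|LS_measure (nu_alpha \<alpha> \<nu>). exp (- (t * r)))
        = enn2real (\<integral>\<^sup>+r. ennreal (indicator {0..} r * exp (- (t * r))) \<partial>interval_measure (RC (nu_alpha \<alpha> \<nu>)))"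
      unfolding set_lebesgue_integral_def LSa nrm2[symmetric]
      by (rule integral_eq_nn_integral[OF measA]) (auto simp: indicator_def)
    also have "\<dots> = t powr (- \<alpha>) * enn2real (\<integral>\<^sup>+r. ennreal (indicator {0..} r * exp (- (t * r))) \<partial>interval_measure (RC \<nu>))"
      unfolding lap by (simp add: enn2real_mult)
    also have "enn2real (\<integral>\<^sup>+r. ennreal (indicator {0..} r * exp (- (t * r))) \<partial>interval_measure (RC \<nu>))
        = (LINT r:{0..}|LS_measure \<nu>. exp (- (t * r)))"
      unfolding set_lebesgue_integral_def LS nrm2[symmetric]
      by (rule integral_eq_nn_integral[OF meas, symmetric]) (auto simp: indicator_def)
    finally show ?thesis using A1 by simp
  qed
  have P3: "nu_alpha \<alpha> \<nu> (2 * s) \<le> C\<^sup>2 * 2 powr (2 * \<alpha>) * nu_alpha \<alpha> \<nu> s" if "s \<ge> 2 * s\<^sub>0" for s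
    by (rule S.na_doubling[OF doubling that s0 C])
  show ?thesis using P1 P2 P3 by blast
qed

end
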